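(* For $j \geq 0$, define $t_{2j} = (ca)^j$ and $t_{2j+1} = a(ca)^j$. Let $k_i$ denote the $i$-th row in the matrix $K$. Then $k_i = t_i(k_0)$.
   Context: Let $X_3=\{0,1,2\}$. Define matrices $K_n$ of size $3^n \times n$ with entries in $X_3$ recursively by \[ K_1 = \begin{bmatrix} 0 \\ 1 \\ 2 \end{bmatrix}, \qquad K_{n+1} = \begin{bmatrix} K_n & 0_n \\ K_n^R & 1_n \\ K_n & 2_n \end{bmatrix}, \] where $K_n^R$ is obtained from $K_n$ by reversing the order of its rows, and $0_n$, $1_n$, $2_n$ are column vectors with $3^n$ entries all equal to $0$, $1$, $2$ respectively. Since $K_n$ is the upper left corner of $K_{n+1}$, the infinite limit matrix $K=\lim_{n\to\infty} K_n$ is well defined; rows are indexed starting from $0$, and each row is regarded as an infinite word over $X_3$ ending in $0^\infty$ (so $k_0 = 0^\infty$). The maps $a$ and $c$ are the ternary tree automorphisms (acting on finite and infinite words over $X_3$) defined recursively for $\{i,j\}=\{0,1\}$ (for $a$) and $\{i,j\}=\{1,2\}$ (for $c$) by: $a_{ij}(\emptyset)=\emptyset$, $a_{ij}(iw)=jw$, $a_{ij}(jw)=iw$, $a_{ij}(xw)=x\,a_{ij}(w)$ for $x\notin\{i,j\}$; i.e. $a=a_{01}$ changes the first occurrence of $0$ or $1$ in a word to the other symbol, and $c=a_{12}$ changes the first occurrence of $1$ or $2$ to the other symbol. Composition is from right to left. *)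

theory Defs
  imports Main
begin

text \<open>Symbols of X_3 = {0,1,2} are represented as natural numbers; infinite words
  over X_3 are functions nat => nat (position m gives the m-th letter).\<close>

text \<open>Kp n is the matrix K_(n+1) (size 3^(n+1) x (n+1)); Kp n r col is its entry in
  row r, column col (0-indexed).  Columns col >= n+1 are 0, i.e. each row is read
  as an infinite word ending in 0^infinity.\<close>
primrec Kp :: "nat \<Rightarrow> nat \<Rightarrow> nat \<Rightarrow> nat" where
  "Kp 0 r col = (if col = 0 then r else 0)"
| "Kp (Suc n) r col =
     (let N = 3 ^ (Suc n); q = r div N; s = r mod N in
      if col < Suc n then (if q = 1 then Kp n (N - 1 - s) col else Kp n s col)
      else if col = Suc n then q else 0)"

text \<open>Row i of the limit matrix K, as an infinite word: taken from K_(n+1) with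
  n = max i col, which is large enough (3^(n+1) > i and col relevant).\<close>
definition krow :: "nat \<Rightarrow> (nat \<Rightarrow> nat)" where
  "krow i = (\<lambda>col. Kp (max i col) i col)"

fun swp :: "nat \<Rightarrow> nat \<Rightarrow> nat list \<Rightarrow> nat list" where
  "swp i j [] = []"
| "swp i j (x # w) = (if x = i then j # w else if x = j then i # w else x # swp i j w)"

definition swpInf :: "nat \<Rightarrow> nat \<Rightarrow> (nat \<Rightarrow> nat) \<Rightarrow> (nat \<Rightarrow> nat)" where
  "swpInf i j w = (\<lambda>m. swp i j (map w [0..<Suc m]) ! m)"

definition aA :: "(nat \<Rightarrow> nat) \<Rightarrow> (nat \<Rightarrow> nat)" where
  "aA = swpInf 0 1"

definition cA :: "(nat \<Rightarrow> nat) \<Rightarrow> (nat \<Rightarrow> nat)" where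
  "cA = swpInf 1 2"

definition tmap :: "nat \<Rightarrow> (nat \<Rightarrow> nat) \<Rightarrow> (nat \<Rightarrow> nat)" where
  "tmap i = (if even i then (cA \<circ> aA) ^^ (i div 2) else aA \<circ> ((cA \<circ> aA) ^^ (i div 2)))"


end

theory Submission
  imports Defs
begin

definition sw :: "nat \<Rightarrow> nat \<Rightarrow> nat \<Rightarrow> nat" where
  "sw i j x = (if x = i then j else if x = j then i else x)"

lemma swp_nth: "m < length xs \<Longrightarrow> swp i j xs ! m =
  (if \<exists>k<m. xs!k = i \<or> xs!k = j then xs!m else sw i j (xs!m))"
proof (induction xs arbitrary: m)
  case Nil then show ?case by simp
next
  case (Cons x xs)
  show ?case
  proof (cases m)
    case 0 then show ?thesis by (simp add: sw_def)
  next
    case (Suc m')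
    have ex: "(\<exists>k<Suc m'. (x#xs)!k = i \<or> (x#xs)!k = j) = (x = i \<or> x = j \<or> (\<exists>k<m'. xs!k = i \<or> xs!k = j))"
      by (auto simp: less_Suc_eq_0_disj)
    show ?thesis using Cons Suc ex by auto
  qed
qed

lemma swpInf_char: "swpInf i j w m = (if \<exists>k<m. w k = i \<or> w k = j then w m else sw i j (w m))"
proof -
  have "swpInf i j w m = swp i j (map w [0..<Suc m]) ! m" by (simp add: swpInf_def)
  also have "\<dots> = (if \<exists>k<m. (map w [0..<Suc m])!k = i \<or> (map w [0..<Suc m])!k = j
      then (map w [0..<Suc m])!m else sw i j ((map w [0..<Suc m])!m))"
    by (rule swp_nth) simp
  also have "(\<exists>k<m. (map w [0..<Suc m])!k = i \<or> (map w [0..<Suc m])!k = j) = (\<exists>k<m. w k = i \<or> w k = j)"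
    by (metis (no_types, lifting) add_0 diff_zero le_imp_less_Suc less_or_eq_imp_le nth_map nth_upt length_upt)
  also have "map w [0..<Suc m] ! m = w m" by (simp del: upt_Suc)
  finally show ?thesis by simp
qed

lemma swpInf_pointwise: "(swpInf i j v k \<in> {i,j}) = (v k \<in> {i,j})"
  by (auto simp: swpInf_char sw_def)

lemma swpInf_inv: "i \<noteq> j \<Longrightarrow> swpInf i j (swpInf i j v) = v"
proof
  fix m assume "i \<noteq> j"
  have e: "(\<exists>k<m. swpInf i j v k = i \<or> swpInf i j v k = j) = (\<exists>k<m. v k = i \<or> v k = j)"
    using swpInf_pointwise[of i j v] by auto
  show "swpInf i j (swpInf i j v) m = v m"
    using \<open>i \<noteq> j\<close> by (simp only: swpInf_char[of i j "swpInf i j v"] e) (auto simp: swpInf_char sw_def)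
qed

definition extw :: "(nat \<Rightarrow> nat) \<Rightarrow> nat \<Rightarrow> nat \<Rightarrow> nat \<Rightarrow> nat" where
  "extw u q n c = (if c \<le> n then u c else if c = Suc n then q else 0)"

lemma lemA:
  assumes "k \<le> n" "u k \<in> {i,j}"
  shows "swpInf i j (extw u q n) = extw (swpInf i j u) q n"
proof
  fix c
  show "swpInf i j (extw u q n) c = extw (swpInf i j u) q n c"
  proof (cases "c \<le> n")
    case True
    have e: "(\<exists>k<c. extw u q n k = i \<or> extw u q n k = j) = (\<exists>k<c. u k = i \<or> u k = j)"
      using True by (auto simp: extw_def)
    have ev: "extw u q n c = u c" "extw (swpInf i j u) q n c = swpInf i j u c" using True by (auto simp: extw_def)
    show ?thesis unfolding swpInf_char[of i j "extw u q n"] e ev by (simp add: swpInf_char)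
  next
    case False
    have "\<exists>k<c. extw u q n k = i \<or> extw u q n k = j"
      using False assms by (intro exI[of _ k]) (auto simp: extw_def)
    then show ?thesis using False by (simp add: swpInf_char extw_def)
  qed
qed

lemma lemB:
  assumes "\<forall>k\<le>n. u k \<notin> {i,j}" "i \<noteq> j"
  shows "swpInf i j (extw u i n) = extw u j n"
proof
  fix c
  show "swpInf i j (extw u i n) c = extw u j n c"
  proof (cases "c \<le> Suc n")
    case True
    have "\<not>(\<exists>k<c. extw u i n k = i \<or> extw u i n k = j)"
      using True assms by (auto simp: extw_def)
    then show ?thesis using True assms by (auto simp: swpInf_char extw_def sw_def)
  next
    case False
    have "\<exists>k<c. extw u i n k = i \<or> extw u i n k = j"
      using False by (intro exI[of _ "Suc n"]) (auto simp: extw_def)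
    then show ?thesis using False by (simp add: swpInf_char extw_def)
  qed
qed

lemma Kp_Suc: "Kp (Suc n) r = extw (Kp n (if r div 3^(Suc n) = 1 then 3^(Suc n) - 1 - r mod 3^(Suc n) else r mod 3^(Suc n))) (r div 3^(Suc n)) n"
  by (rule ext) (simp add: Let_def extw_def)

lemma Kp_zero: "Kp n 0 c = 0"
  by (induction n arbitrary: c) (auto simp: Let_def)

lemma Kp_high: "n < c \<Longrightarrow> Kp n r c = 0"
  by (induction n arbitrary: r) (auto simp: Let_def)

lemma Kp_last: "Kp n (3^(Suc n) - 1) c = (if c \<le> n then 2 else 0)"
proof (induction n arbitrary: c)
  case 0 then show ?case by simp
next
  case (Suc n)
  define N :: nat where "N = 3^(Suc n)"
  have N: "N \<ge> 1" by (simp add: N_def)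
  obtain M where M: "N = Suc M" using N by (cases N) auto
  have e: "3^(Suc (Suc n)) - 1 = M + 2 * N" using M by (simp add: N_def)
  have MN: "M < N" "N \<noteq> 0" using M by auto
  have d: "(M + 2 * N) div N = 2" "(M + 2 * N) mod N = N - 1"
    using div_mult_self1[of N M 2] mod_mult_self1[of M 2 N] MN M by (simp_all add: mult.commute)
  have N': "N - 1 - (N - 1) = 0" "N - 1 = 3^(Suc n) - 1" by (simp_all add: N_def)
  show ?case unfolding Kp_Suc e N_def[symmetric] d using Suc.IH N' by (auto simp: extw_def)
qed

lemma Kp_stab: "r < 3^(Suc n) \<Longrightarrow> Kp (n + d) r c = Kp n r c"
proof (induction d arbitrary: c)
  case 0 then show ?case by simp
next
  case (Suc d)
  have "(3::nat)^(Suc n) \<le> 3^(Suc (n+d))" by (rule power_increasing) simp_all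
  then have "r < 3^(Suc (n+d))" using Suc.prems by linarith
  then have "r div 3^(Suc (n+d)) = 0" "r mod 3^(Suc (n+d)) = r" by simp_all
  then show ?case using Suc Kp_high[of "n+d" c r] by (auto simp: Let_def)
qed

definition pp :: "nat \<Rightarrow> nat" where "pp r = (if even r then 0 else 1)"
definition opr :: "nat \<Rightarrow> (nat \<Rightarrow> nat) \<Rightarrow> (nat \<Rightarrow> nat)" where
  "opr r = swpInf (pp r) (Suc (pp r))"

lemma dm: "s' < (N::nat) \<Longrightarrow> (s' + q*N) div N = q" "s' < N \<Longrightarrow> (s' + q*N) mod N = s'"
  by simp_all

declare Kp.simps(2)[simp del]

lemma gray: "Suc r < 3^(Suc n) \<Longrightarrow>
   Kp n (Suc r) = opr r (Kp n r) \<and> (\<exists>k\<le>n. Kp n r k \<in> {pp r, Suc (pp r)})"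
proof (induction n arbitrary: r)
  case 0
  then have "r = 0 \<or> r = 1" by auto
  then show ?case
  proof
    assume r: "r = 0"
    have "Kp 0 (Suc r) = opr r (Kp 0 r)"
      by (rule ext) (auto simp: r opr_def pp_def swpInf_char sw_def)
    moreover have "Kp 0 r 0 \<in> {pp r, Suc (pp r)}" by (simp add: r pp_def)
    ultimately show ?thesis by blast
  next
    assume r: "r = 1"
    have "Kp 0 (Suc r) = opr r (Kp 0 r)"
      by (rule ext) (auto simp: r opr_def pp_def swpInf_char sw_def)
    moreover have "Kp 0 r 0 \<in> {pp r, Suc (pp r)}" by (simp add: r pp_def)
    ultimately show ?thesis by blast
  qed
next
  case (Suc n)
  define N :: nat where "N = 3^(Suc n)"
  have Npos: "N > 0" by (simp add: N_def)
  have Nodd: "odd N" by (simp add: N_def)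
  define q where "q = r div N"
  define s where "s = r mod N"
  have rqs: "r = s + q * N" by (simp add: q_def s_def)
  have sN: "s < N" using Npos by (simp add: s_def)
  have r3: "Suc r < 3 * N" using Suc.prems by (simp add: N_def)
  have "q * N < 3 * N" using r3 rqs by linarith
  then have q3: "q < 3" by simp
  obtain M where NM: "N = 2 * M + 1" using Nodd oddE by blast
  have KS: "\<And>x. Kp (Suc n) x = extw (Kp n (if x div N = 1 then N - 1 - x mod N else x mod N)) (x div N) n"
    unfolding N_def by (rule Kp_Suc)
  have Kr: "Kp (Suc n) r = extw (Kp n (if q = 1 then N - 1 - s else s)) q n"
    using KS[of r] by (simp add: q_def s_def)
  have IH: "\<And>x. Suc x < N \<Longrightarrow> Kp n (Suc x) = opr x (Kp n x) \<and> (\<exists>k\<le>n. Kp n x k \<in> {pp x, Suc (pp x)})"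
    using Suc.IH by (simp add: N_def)
  show ?case
  proof (cases "Suc s < N")
    case True
    have Sr: "Suc r = Suc s + q * N" using rqs by simp
    have d1: "Suc r div N = q" "Suc r mod N = Suc s" by (simp_all only: Sr dm[OF True])
    have KSr: "Kp (Suc n) (Suc r) = extw (Kp n (if q = 1 then N - 1 - Suc s else Suc s)) q n"
      using KS[of "Suc r"] d1 by simp
    show ?thesis
    proof (cases "q = 1")
      case False
      then have "q = 0 \<or> q = 2" using q3 by linarith
      then have "r = s \<or> r = s + 2 * N" using rqs by auto
      then have ps: "pp s = pp r" by (auto simp: pp_def)
      obtain k where k: "k \<le> n" "Kp n s k \<in> {pp s, Suc (pp s)}" and e: "Kp n (Suc s) = opr s (Kp n s)"
        using IH[OF True] by blast
      have "Kp (Suc n) (Suc r) = extw (opr r (Kp n s)) q n" using KSr False e ps by (simp add: opr_def)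
      also have "\<dots> = opr r (extw (Kp n s) q n)" unfolding opr_def
        using lemA[of k n "Kp n s" "pp r" "Suc (pp r)" q] k ps by simp
      also have "\<dots> = opr r (Kp (Suc n) r)" using Kr False by simp
      finally have E: "Kp (Suc n) (Suc r) = opr r (Kp (Suc n) r)" .
      have "Kp (Suc n) r k \<in> {pp r, Suc (pp r)}" using Kr False k ps by (simp add: extw_def)
      then show ?thesis using E k(1) le_SucI by blast
    next
      case True1: True
      define s' where "s' = N - 2 - s"
      have s'1: "Suc s' = N - 1 - s" "N - 1 - Suc s = s'" using True by (auto simp: s'_def)
      have s'N: "Suc s' < N" using s'1 Npos True by linarith
      have ps: "pp s' = pp r"
      proof -
        have "N = s' + s + 2" using True by (simp add: s'_def)
        then have "r = s' + 2 * (s + 1)" using rqs True1 by simp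
        then show ?thesis by (simp add: pp_def)
      qed
      obtain k where k: "k \<le> n" "Kp n s' k \<in> {pp s', Suc (pp s')}" and e: "Kp n (Suc s') = opr s' (Kp n s')"
        using IH[OF s'N] by blast
      have inv: "Kp n s' = opr r (Kp n (Suc s'))"
        using e ps swpInf_inv[of "pp r" "Suc (pp r)" "Kp n s'"] by (simp add: opr_def)
      have k2: "Kp n (Suc s') k \<in> {pp r, Suc (pp r)}"
        using k e ps swpInf_pointwise[of "pp r" "Suc (pp r)" "Kp n s'" k] by (simp add: opr_def)
      have "Kp (Suc n) (Suc r) = extw (opr r (Kp n (Suc s'))) q n" using KSr True1 inv s'1 by simp
      also have "\<dots> = opr r (extw (Kp n (Suc s')) q n)" unfolding opr_def
        using lemA[of k n "Kp n (Suc s')" "pp r" "Suc (pp r)" q] k k2 by simp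
      also have "\<dots> = opr r (Kp (Suc n) r)" using Kr True1 s'1 by simp
      finally have E: "Kp (Suc n) (Suc r) = opr r (Kp (Suc n) r)" .
      have "Kp (Suc n) r k \<in> {pp r, Suc (pp r)}" using Kr True1 s'1 k k2 by (simp add: extw_def)
      then show ?thesis using E k(1) le_SucI by blast
    qed
  next
    case False
    then have sN1: "s = N - 1" using sN by simp
    have q2: "q < 2"
    proof (rule ccontr)
      assume "\<not> q < 2"
      then have "q * N \<ge> 2 * N" by simp
      then show False using r3 rqs sN1 Npos by linarith
    qed
    show ?thesis
    proof (cases "q = 0")
      case True
      have r: "r = N - 1" using rqs True sN1 by simp
      have Sr: "Suc r = 0 + 1 * N" using r Npos by simp
      have d1: "Suc r div N = 1" "Suc r mod N = 0" unfolding Sr using dm[of 0 N 1] Npos by simp_all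
      have KSr: "Kp (Suc n) (Suc r) = extw (Kp n (N - 1)) 1 n"
        using KS[of "Suc r"] d1 by simp
      have Kr': "Kp (Suc n) r = extw (Kp n (N - 1)) 0 n" using Kr True sN1 by simp
      have pr: "pp r = 0" using r NM by (simp add: pp_def)
      have last: "\<forall>k\<le>n. Kp n (N - 1) k \<notin> {0, 1}"
        using Kp_last[of n] by (simp add: N_def)
      have "Kp (Suc n) (Suc r) = opr r (Kp (Suc n) r)"
        unfolding KSr Kr' opr_def pr using lemB[OF last, of] by simp
      moreover have "Kp (Suc n) r (Suc n) \<in> {pp r, Suc (pp r)}" using Kr' pr by (simp add: extw_def)
      ultimately show ?thesis by blast
    next
      case False
      then have q1: "q = 1" using q2 by simp
      have r: "r = N + (N - 1)" using rqs q1 sN1 by simp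
      have Sr: "Suc r = 0 + 2 * N" using r Npos by simp
      have d1: "Suc r div N = 2" "Suc r mod N = 0" unfolding Sr using dm[of 0 N 2] Npos by simp_all
      have KSr: "Kp (Suc n) (Suc r) = extw (Kp n 0) 2 n"
        using KS[of "Suc r"] d1 by simp
      have Kr': "Kp (Suc n) r = extw (Kp n 0) 1 n" using Kr q1 sN1 by simp
      have pr: "pp r = 1" using r NM by (simp add: pp_def)
      have z: "\<forall>k\<le>n. Kp n 0 k \<notin> {1, 2}" by (simp add: Kp_zero)
      have "Kp (Suc n) (Suc r) = opr r (Kp (Suc n) r)"
        unfolding KSr Kr' opr_def pr using lemB[OF z] by (simp add: numeral_2_eq_2)
      moreover have "Kp (Suc n) r (Suc n) \<in> {pp r, Suc (pp r)}" using Kr' pr by (simp add: extw_def)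
      ultimately show ?thesis by blast
    qed
  qed
qed

lemma lt3: "(i::nat) < 3^(Suc i)"
  by (induction i) auto

lemma Kp_stab2: "r < 3^(Suc n) \<Longrightarrow> n \<le> m \<Longrightarrow> Kp m r c = Kp n r c"
  using Kp_stab[of r n "m - n" c] by simp

lemma krow_eq: "i \<le> n \<Longrightarrow> krow i = Kp n i"
proof
  fix c assume "i \<le> n"
  define m where "m = max n (max i c)"
  have "(3::nat)^(Suc i) \<le> 3^(Suc n)" using \<open>i \<le> n\<close> by (intro power_increasing) simp_all
  then have a: "i < 3^(Suc n)" using lt3[of i] by linarith
  have "(3::nat)^(Suc i) \<le> 3^(Suc (max i c))" by (intro power_increasing) simp_all
  then have b: "i < 3^(Suc (max i c))" using lt3[of i] by linarith
  have "krow i c = Kp (max i c) i c" by (simp add: krow_def)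
  also have "\<dots> = Kp m i c" using Kp_stab2[OF b, of m c] by (simp add: m_def)
  also have "\<dots> = Kp n i c" using Kp_stab2[OF a, of m c] by (simp add: m_def)
  finally show "krow i c = Kp n i c" .
qed

lemma krow_step: "krow (Suc i) = opr i (krow i)"
proof -
  have "Suc i < 3^(Suc (Suc i))" using lt3[of "Suc i"] .
  then have "Kp (Suc i) (Suc i) = opr i (Kp (Suc i) i)" using gray by blast
  then show ?thesis using krow_eq[of "Suc i" "Suc i"] krow_eq[of i "Suc i"] by simp
qed

lemma tmap_step: "tmap (Suc i) = opr i \<circ> tmap i"
proof (cases "even i")
  case True
  then have "Suc i div 2 = i div 2" by presburger
  then show ?thesis using True by (simp add: tmap_def opr_def pp_def aA_def)
next
  case False
  then have "Suc i div 2 = Suc (i div 2)" by presburger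
  moreover have ev: "even (Suc i)" using False by simp
  moreover have "cA = swpInf (pp i) (Suc (pp i))" using False by (simp add: cA_def pp_def numeral_2_eq_2)
  ultimately show ?thesis using False by (simp add: tmap_def opr_def aA_def o_assoc)
qed

theorem mainTheorem9:
  shows "\<forall>i::nat. krow i = tmap i (krow 0)"
proof
  fix i :: nat
  show "krow i = tmap i (krow 0)"
  proof (induction i)
    case 0 then show ?case by (simp add: tmap_def)
  next
    case (Suc i)
    then show ?case using krow_step tmap_step by simp
  qed
qed

end
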